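(* Let $N\ge1$, $f:\mathbb{N}^N\to\mathbb{N}$, $p$ a prime, $n$ a nonnegative integer, and let $\boldsymbol{\ell}\in\mathbb{N}^N$ be such that $\boldsymbol{\ell}\neq p\mathbf{m}$ for every $\mathbf{m}\in\mathbb{N}^N$. Define $g:\mathbb{N}^N\to\mathbb{N}$ by $g(\mathbf{x})=\binom{p}{p\mathbf{x}}_f$. Then $$\binom{np}{\boldsymbol{\ell}}_f\equiv n\cdot\sum_{\mathbf{k}}\binom{p}{\mathbf{k}}_f\binom{n-1}{\mathbf{x}_{\mathbf{k}}}_g\pmod{p^2},$$ where the sum runs over all $\mathbf{k}\in S(\boldsymbol{\ell})$ such that not every entry of $\mathbf{k}$ is divisible by $p$ and $\boldsymbol{\ell}-\mathbf{k}=p\mathbf{x}_{\mathbf{k}}$ for some $\mathbf{x}_{\mathbf{k}}\in\mathbb{N}^N$.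
   Context: $\mathbb{N}=\{0,1,2,\dots\}$. $S(\boldsymbol{\ell})=\{\mathbf{s}\in\mathbb{N}^N:\mathbf{s}\neq\mathbf{0},\ 0\le s_j\le\ell_j\ \forall j\}$. For $h:\mathbb{N}^N\to\mathbb{N}$, $k\ge0$ and $\mathbf{x}\in\mathbb{N}^N$, $\binom{k}{\mathbf{x}}_h=\sum_{\mathbf{m}_1+\cdots+\mathbf{m}_k=\mathbf{x}} h(\mathbf{m}_1)\cdots h(\mathbf{m}_k)$ over tuples of vectors in $\mathbb{N}^N$. *)

theory Defs
  imports "HOL-Analysis.Finite_Cartesian_Product" "HOL-Number_Theory.Cong"
begin

text \<open>Vectors in N^N are modelled as nat ^ 'n for a finite index type 'n (so N = CARD('n) >= 1).\<close>

definition vscale :: "nat \<Rightarrow> nat ^ 'n \<Rightarrow> nat ^ 'n" where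
  "vscale c x = (\<chi> j. c * x $ j)"

definition gbinom :: "(nat ^ 'n \<Rightarrow> nat) \<Rightarrow> nat \<Rightarrow> nat ^ 'n \<Rightarrow> nat" where
  "gbinom h k x = (\<Sum>ms \<in> {ms. length ms = k \<and> sum_list ms = x}. prod_list (map h ms))"

definition Sset :: "nat ^ 'n \<Rightarrow> (nat ^ 'n) set" where
  "Sset l = {s. s \<noteq> 0 \<and> (\<forall>j. s $ j \<le> l $ j)}"

end

theory Submission
  imports Defs
begin


definition D :: "nat ^ 'n \<Rightarrow> (nat ^ 'n) set" where
  "D x = {y. \<forall>j. y $ j \<le> x $ j}"

lemma finite_D: "finite (D (x::nat^'n::finite))"
proof -
  have "D x \<subseteq> vec_lambda ` (PiE UNIV (\<lambda>j. {..x$j}))"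
  proof
    fix y assume "y \<in> D x"
    then have "y = vec_lambda (\<lambda>j. y $ j)" "(\<lambda>j. y $ j) \<in> PiE UNIV (\<lambda>j. {..x$j})"
      by (auto simp: D_def)
    then show "y \<in> vec_lambda ` (PiE UNIV (\<lambda>j. {..x$j}))" by blast
  qed
  moreover have "finite (PiE UNIV (\<lambda>j. {..x$j}))" by (rule finite_PiE) auto
  ultimately show ?thesis using finite_subset by blast
qed

definition L :: "nat \<Rightarrow> nat ^ 'n \<Rightarrow> (nat ^ 'n) list set" where
  "L k x = {ms. length ms = k \<and> sum_list ms = x}"

lemma sum_list_le: "m \<in> set ms \<Longrightarrow> (m::nat^'n) $ j \<le> sum_list ms $ j"
  by (induction ms) auto

lemma finite_L: "finite (L k (x::nat^'n::finite))"
proof -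
  have "L k x \<subseteq> {ms. set ms \<subseteq> D x \<and> length ms = k}"
    by (auto simp: L_def D_def dest: sum_list_le)
  moreover have "finite {ms. set ms \<subseteq> D x \<and> length ms = k}"
    by (rule finite_lists_length_eq[OF finite_D])
  ultimately show ?thesis using finite_subset by blast
qed

lemma gbinom_L: "gbinom h k x = (\<Sum>ms \<in> L k x. prod_list (map h ms))"
  by (simp add: gbinom_def L_def)

lemma gbinom_0: "gbinom h 0 x = (if x = 0 then 1 else 0)"
proof -
  have "L 0 x = (if x = 0 then {[]} else {})" by (auto simp: L_def)
  then show ?thesis by (simp add: gbinom_L)
qed

definition conv :: "(nat^'n \<Rightarrow> nat) \<Rightarrow> (nat^'n \<Rightarrow> nat) \<Rightarrow> nat^'n \<Rightarrow> nat" where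
  "conv u v x = (\<Sum>y\<in>D x. u y * v (x - y))"

lemma gbinom_Suc: "gbinom h (Suc k) x = conv h (gbinom h k) x"
proof -
  have eq: "L (Suc k) x = (\<Union>y\<in>D x. (Cons y) ` L k (x - y))"
  proof (rule set_eqI, rule iffI)
    fix ms assume "ms \<in> L (Suc k) x"
    then obtain y ms' where ms: "ms = y # ms'" "length ms' = k" "y + sum_list ms' = x"
      by (cases ms) (auto simp: L_def)
    then have "y \<in> D x" by (auto simp: D_def)
    moreover have "sum_list ms' = x - y" unfolding ms(3)[symmetric] by (simp add: vec_eq_iff)
    ultimately show "ms \<in> (\<Union>y\<in>D x. (Cons y) ` L k (x - y))" using ms by (auto simp: L_def)
  next
    fix ms assume "ms \<in> (\<Union>y\<in>D x. (Cons y) ` L k (x - y))"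
    then obtain y ms' where "y \<in> D x" "ms = y # ms'" "length ms' = k" "sum_list ms' = x - y"
      by (auto simp: L_def)
    then show "ms \<in> L (Suc k) x" by (auto simp: L_def D_def vec_eq_iff)
  qed
  have "gbinom h (Suc k) x = (\<Sum>y\<in>D x. \<Sum>ms\<in>(Cons y) ` L k (x - y). prod_list (map h ms))"
    unfolding gbinom_L eq
    by (rule sum.UNION_disjoint) (auto simp: finite_D finite_L)
  also have "\<dots> = (\<Sum>y\<in>D x. h y * gbinom h k (x - y))"
    by (rule sum.cong[OF refl], subst sum.reindex) (auto simp: gbinom_L sum_distrib_left)
  finally show ?thesis by (simp add: conv_def)
qed

lemma diff_diff_D: "y \<in> D x \<Longrightarrow> x - (x - y) = (y::nat^'n)"
  by (auto simp: D_def vec_eq_iff)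

lemma conv_comm: "conv u v x = conv v u (x::nat^'n::finite)"
  unfolding conv_def
  by (rule sum.reindex_bij_witness[where i="\<lambda>y. x - y" and j="\<lambda>y. x - y"])
     (auto simp: diff_diff_D, auto simp: D_def mult.commute)

lemma swap_D:
  "(\<Sum>y\<in>D x. \<Sum>z\<in>D (x - y). F y z) = (\<Sum>w\<in>D x. \<Sum>y\<in>D w. F y (w - y))"
  for x :: "nat^'n::finite"
proof -
  have "(\<Sum>y\<in>D x. \<Sum>z\<in>D (x - y). F y z) = (\<Sum>(y,z)\<in>Sigma (D x) (\<lambda>y. D (x - y)). F y z)"
    by (rule sum.Sigma) (auto simp: finite_D)
  also have "\<dots> = (\<Sum>(w,y)\<in>Sigma (D x) D. F y (w - y))"
    by (rule sum.reindex_bij_witness[where i="\<lambda>(w,y). (y, w - y)" and j="\<lambda>(y,z). (y + z, y)"])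
       (auto simp: D_def vec_eq_iff le_diff_conv2 add.commute, (meson order_trans diff_le_mono)+)
  also have "\<dots> = (\<Sum>w\<in>D x. \<Sum>y\<in>D w. F y (w - y))"
    by (rule sum.Sigma[symmetric]) (auto simp: finite_D)
  finally show ?thesis .
qed

lemma conv_assoc: "conv u (conv v w) x = conv (conv u v) w (x::nat^'n::finite)"
proof -
  have "conv u (conv v w) x = (\<Sum>y\<in>D x. \<Sum>z\<in>D (x - y). u y * v z * w (x - y - z))"
    by (simp add: conv_def sum_distrib_left mult.assoc)
  also have "\<dots> = (\<Sum>t\<in>D x. \<Sum>y\<in>D t. u y * v (t - y) * w (x - y - (t - y)))"
    by (rule swap_D)
  also have "\<dots> = (\<Sum>t\<in>D x. \<Sum>y\<in>D t. u y * v (t - y) * w (x - t))"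
  proof (rule sum.cong[OF refl], rule sum.cong[OF refl])
    fix t y assume "t \<in> D x" "y \<in> D t"
    then have "x - y - (t - y) = x - t" by (auto simp: D_def vec_eq_iff)
    then show "u y * v (t - y) * w (x - y - (t - y)) = u y * v (t - y) * w (x - t)" by simp
  qed
  also have "\<dots> = conv (conv u v) w x"
    by (simp add: conv_def sum_distrib_right)
  finally show ?thesis .
qed

lemma gbinom_add: "gbinom h (a + b) x = conv (gbinom h a) (gbinom h b) (x::nat^'n::finite)"
proof (induction a arbitrary: x)
  case 0
  have "conv (gbinom h 0) (gbinom h b) x = (\<Sum>y\<in>D x. if y = 0 then gbinom h b (x - y) else 0)"
    by (auto simp: conv_def gbinom_0 intro!: sum.cong)
  also have "\<dots> = gbinom h b x"
    using finite_D[of x] by (subst sum.delta) (auto simp: D_def)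
  finally show ?case by simp
next
  case (Suc a)
  have "gbinom h (Suc a + b) x = conv h (gbinom h (a + b)) x" by (simp add: gbinom_Suc)
  also have "\<dots> = conv h (conv (gbinom h a) (gbinom h b)) x"
    using Suc by (simp add: conv_def)
  also have "\<dots> = conv (conv h (gbinom h a)) (gbinom h b) x" by (rule conv_assoc)
  also have "\<dots> = conv (gbinom h (Suc a)) (gbinom h b) x"
    by (simp add: conv_def gbinom_Suc)
  finally show ?case .
qed

lemma gbinom_mult: "gbinom f (n * p) x = gbinom (gbinom f p) n (x::nat^'n::finite)"
proof (induction n arbitrary: x)
  case 0 then show ?case by (simp add: gbinom_0)
next
  case (Suc n)
  have "gbinom f (Suc n * p) x = conv (gbinom f p) (gbinom f (n * p)) x"
    by (simp add: gbinom_add)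
  also have "\<dots> = gbinom (gbinom f p) (Suc n) x"
    using Suc by (simp add: gbinom_Suc conv_def)
  finally show ?case .
qed




lemma funpow_in: "(\<forall>x\<in>A. r x \<in> A) \<Longrightarrow> x \<in> A \<Longrightarrow> (r^^i) x \<in> A"
  by (induction i) auto

lemma funpow_w: "(\<forall>x\<in>A. r x \<in> A) \<Longrightarrow> (\<forall>x\<in>A. w (r x) = w x) \<Longrightarrow> x \<in> A \<Longrightarrow> w ((r^^i) x) = w x"
  by (induction i) (auto simp: funpow_in)

lemma funpow_mod:
  assumes "\<forall>x\<in>A. r x \<in> A" "\<forall>x\<in>A. (r^^p) x = x" "x \<in> A"
  shows "(r^^i) x = (r^^(i mod p)) x"
proof -
  have q: "(r^^(q*p)) x = x" for q
  proof (induction q)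
    case (Suc q)
    have "(r^^(Suc q * p)) x = (r^^p) ((r^^(q*p)) x)" by (simp add: funpow_add)
    then show ?case using Suc assms by simp
  qed simp
  have "(r^^i) x = (r^^(i mod p + (i div p) * p)) x" by (simp only: mod_div_mult_eq)
  also have "\<dots> = (r^^(i mod p)) ((r^^((i div p)*p)) x)" by (simp only: funpow_add comp_apply)
  finally have "(r^^i) x = (r^^(i mod p)) ((r^^((i div p)*p)) x)" .
  then show ?thesis using q by simp
qed

lemma orbit_dvd:
  fixes w :: "'a \<Rightarrow> nat"
  assumes "finite A" "\<forall>x\<in>A. r x \<in> A" "\<forall>x\<in>A. (r^^p) x = x"
    "\<forall>x\<in>A. \<forall>d. 0 < d \<and> d < p \<longrightarrow> (r^^d) x \<noteq> x" "\<forall>x\<in>A. w (r x) = w x" "0 < p"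
  shows "p dvd (\<Sum>x\<in>A. w x)"
  using assms
proof (induction "card A" arbitrary: A rule: less_induct)
  case less
  show ?case
  proof (cases "A = {}")
    case True then show ?thesis by simp
  next
    case False
    then obtain x where x: "x \<in> A" by blast
    define Ob where "Ob = (\<lambda>i. (r^^i) x) ` {..<p}"
    have ObA: "Ob \<subseteq> A" using less.prems x by (auto simp: Ob_def funpow_in)
    have inj: "inj_on (\<lambda>i. (r^^i) x) {..<p}"
    proof (rule inj_onI, rule ccontr)
      fix i j assume ij: "i \<in> {..<p}" "j \<in> {..<p}" "(r^^i) x = (r^^j) x" "i \<noteq> j"
      have gen: "False" if "i < j" "j < p" "(r^^i) x = (r^^j) x" for i j
      proof -
        have "(r^^(p - j + i)) x = (r^^(p - j)) ((r^^i) x)" by (simp add: funpow_add)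
        also have "\<dots> = (r^^(p - j)) ((r^^j) x)" using that by simp
        also have "\<dots> = (r^^(p - j + j)) x" by (simp add: funpow_add)
        also have "\<dots> = (r^^p) x" using that by simp
        also have "\<dots> = x" using less.prems x by simp
        finally have "(r^^(p - j + i)) x = x" .
        moreover have "0 < p - j + i" "p - j + i < p" using that by auto
        ultimately show False using less.prems(4) x by blast
      qed
      show False using ij gen[of i j] gen[of j i] by (cases "i < j") auto
    qed
    have cardOb: "card Ob = p" using inj by (simp add: Ob_def card_image)
    have sumOb: "(\<Sum>y\<in>Ob. w y) = p * w x"
    proof -
      have "(\<Sum>y\<in>Ob. w y) = (\<Sum>i<p. w ((r^^i) x))" unfolding Ob_def by (rule sum.reindex[OF inj, unfolded comp_def])
      also have "\<dots> = (\<Sum>i<p. w x)" using less.prems x by (intro sum.cong refl funpow_w) auto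
      finally show ?thesis by simp
    qed
    have closed: "\<forall>y\<in>A - Ob. r y \<in> A - Ob"
    proof
      fix y assume y: "y \<in> A - Ob"
      have "r y \<notin> Ob"
      proof
        assume "r y \<in> Ob"
        then obtain i where i: "i < p" "r y = (r^^i) x" by (auto simp: Ob_def)
        have "y = (r^^p) y" using less.prems y by simp
        also have "\<dots> = (r^^(Suc (p - 1))) y" using \<open>0<p\<close> by simp
        also have "\<dots> = (r^^(p - 1)) (r y)" by (simp only: funpow_Suc_right comp_apply)
        also have "\<dots> = (r^^(p - 1 + i)) x" using i funpow_add[of "p - 1" i r, THEN fun_cong, of x] by simp
        also have "\<dots> = (r^^((p - 1 + i) mod p)) x" using less.prems x by (intro funpow_mod) auto
        finally have "y \<in> Ob" using \<open>0<p\<close> by (auto simp: Ob_def)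
        then show False using y by simp
      qed
      then show "r y \<in> A - Ob" using y less.prems by auto
    qed
    have "finite Ob" using ObA less.prems finite_subset by blast
    then have "card (A - Ob) = card A - p" using ObA cardOb by (simp add: card_Diff_subset)
    moreover have "card A > 0" using less.prems x card_gt_0_iff by blast
    ultimately have "card (A - Ob) < card A" using less.prems by simp
    then have "p dvd (\<Sum>y\<in>A - Ob. w y)"
      using less.hyps[of "A - Ob"] less.prems closed by auto
    moreover have "(\<Sum>y\<in>A. w y) = (\<Sum>y\<in>A - Ob. w y) + (\<Sum>y\<in>Ob. w y)"
      using ObA less.prems by (intro sum.subset_diff)
    ultimately show ?thesis using sumOb by simp
  qed
qed




lemma sum_list_rotate1: "sum_list (rotate1 xs) = sum_list (xs :: (nat^'n) list)"
  by (cases xs) (simp_all add: add.commute)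

lemma prod_list_rotate1: "prod_list (map h (rotate1 xs)) = prod_list (map h xs :: nat list)"
  by (cases xs) (simp_all add: mult.commute)

lemma sum_list_replicate_comp: "sum_list (replicate m (v::nat^'n)) $ j = m * v $ j"
  by (induction m) auto

lemma rotate_period:
  assumes "prime p" "length xs = p" "0 < d" "d < p" "rotate d xs = xs"
  shows "xs = replicate p (xs ! 0)"
proof -
  have p0: "0 < p" using assms prime_gt_0_nat by blast
  have base: "xs ! i = xs ! ((d + i) mod p)" if "i < p" for i
    using nth_rotate[of i xs d] assms that by simp
  have iter: "xs ! i = xs ! ((t * d + i) mod p)" if "i < p" for t i
  proof (induction t)
    case 0 then show ?case using that by simp
  next
    case (Suc t)
    define k where "k = (t * d + i) mod p"
    have "k < p" using p0 by (simp add: k_def)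
    have "(d + k) mod p = (Suc t * d + i) mod p"
      unfolding k_def by (simp add: mod_add_right_eq add.assoc)
    then show ?case using Suc base[OF \<open>k < p\<close>] by (simp add: k_def)
  qed
  have "coprime p d" using assms by (intro prime_imp_coprime) (auto dest: dvd_imp_le)
  then have "gcd d p = 1" by (simp add: coprime_iff_gcd_eq_1 gcd.commute)
  then obtain e where e: "[d * e = 1] (mod p)" using cong_solve_nat[of d p] by auto
  have all: "xs ! j = xs ! 0" if "j < p" for j
  proof -
    have "[e * j * d = j] (mod p)"
      using cong_scalar_right[OF e, of j] by (simp add: ac_simps)
    then have "(e * j * d + 0) mod p = j" using that by (simp add: cong_def)
    then show ?thesis using iter[of 0 "e * j"] p0 by simp
  qed
  show ?thesis
  proof (rule nth_equalityI)
    show "length xs = length (replicate p (xs ! 0))" using assms by simp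
    fix i assume "i < length xs"
    then have "i < p" using assms by simp
    have "replicate p (xs ! 0) ! i = xs ! 0" using \<open>i < p\<close> by simp
    then show "xs ! i = replicate p (xs ! 0) ! i" using all[OF \<open>i < p\<close>] by simp
  qed
qed

lemma gbinom_p_dvd:
  fixes h :: "nat^'n \<Rightarrow> nat"
  assumes "prime p" "\<not> (\<forall>j. p dvd y $ j)"
  shows "p dvd gbinom h p y"
proof -
  have p0: "0 < p" using assms prime_gt_0_nat by blast
  show ?thesis unfolding gbinom_L
  proof (rule orbit_dvd[where r=rotate1])
    show "finite (L p y)" by (rule finite_L)
    show "\<forall>x\<in>L p y. rotate1 x \<in> L p y" by (auto simp: L_def sum_list_rotate1)
    show "\<forall>x\<in>L p y. (rotate1 ^^ p) x = x" by (auto simp: L_def rotate_def[symmetric])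
    show "\<forall>x\<in>L p y. prod_list (map h (rotate1 x)) = prod_list (map h x)"
      by (simp add: prod_list_rotate1)
    show "0 < p" by (rule p0)
    show "\<forall>x\<in>L p y. \<forall>d. 0 < d \<and> d < p \<longrightarrow> (rotate1 ^^ d) x \<noteq> x"
    proof (intro ballI allI impI notI)
      fix xs d assume xs: "xs \<in> L p y" and d: "0 < d \<and> d < p" and r: "(rotate1 ^^ d) xs = xs"
      have rep: "xs = replicate p (xs ! 0)"
        using assms xs d r by (intro rotate_period) (auto simp: L_def rotate_def)
      have "y $ j = p * (xs ! 0) $ j" for j
      proof -
        have "y = sum_list xs" using xs by (simp add: L_def)
        also have "\<dots> = sum_list (replicate p (xs ! 0))" by (rule arg_cong[OF rep])
        finally show ?thesis using sum_list_replicate_comp[of p "xs!0" j] by simp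
      qed
      then show False using assms by auto
    qed
  qed
qed




lemma conv_add_left: "conv (\<lambda>y. u y + v y) w x = conv u w x + conv v w x"
  by (simp add: conv_def algebra_simps sum.distrib)

lemma conv_dvd_left: "(\<And>y. d dvd u y) \<Longrightarrow> d dvd conv u w x"
  by (simp add: conv_def dvd_sum)

lemma conv_comm_fun: "conv u v = conv v (u :: nat^'n::finite \<Rightarrow> nat)"
  by (rule ext, rule conv_comm)

lemma main_cong:
  fixes f :: "nat^'n::finite \<Rightarrow> nat"
  assumes p: "prime p"
  defines "h1 \<equiv> gbinom f p"
  defines "a \<equiv> (\<lambda>y. if (\<forall>j. p dvd y $ j) then h1 y else 0)"
  defines "b \<equiv> (\<lambda>y. if (\<forall>j. p dvd y $ j) then 0 else h1 y)"
  shows "[gbinom h1 k x = gbinom a k x + k * conv b (gbinom a (k - 1)) x] (mod p^2)"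
proof (induction k arbitrary: x)
  case 0 then show ?case by (simp add: gbinom_0)
next
  case (Suc k)
  have bd: "p dvd b y" for y using gbinom_p_dvd[OF p] by (auto simp: b_def h1_def)
  have split: "h1 y = a y + b y" for y by (simp add: a_def b_def)
  define B where "B = conv b (gbinom a (k - 1))"
  have Bd: "p dvd B z" for z unfolding B_def by (rule conv_dvd_left[OF bd])
  have "gbinom h1 (Suc k) x = (\<Sum>y\<in>D x. h1 y * gbinom h1 k (x - y))"
    by (simp add: gbinom_Suc conv_def)
  also have "[\<dots> = (\<Sum>y\<in>D x. h1 y * (gbinom a k (x - y) + k * B (x - y)))] (mod p^2)"
    by (intro cong_sum cong_mult cong_refl) (use Suc in \<open>simp add: B_def\<close>)
  also have "(\<Sum>y\<in>D x. h1 y * (gbinom a k (x - y) + k * B (x - y)))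
      = conv a (gbinom a k) x + conv b (gbinom a k) x + k * conv a B x + k * conv b B x"
    by (simp add: conv_def split algebra_simps sum.distrib sum_distrib_left)
  also have "[\<dots> = conv a (gbinom a k) x + conv b (gbinom a k) x + k * conv a B x + 0] (mod p^2)"
  proof (intro cong_add cong_refl)
    have "p^2 dvd conv b B x" unfolding conv_def power2_eq_square
      by (intro dvd_sum) (use bd Bd in \<open>auto intro: mult_dvd_mono\<close>)
    then show "[k * conv b B x = 0] (mod p^2)" by (simp add: cong_0_iff)
  qed
  also have "k * conv a B x = k * conv b (gbinom a k) x"
  proof (cases k)
    case (Suc m)
    have "conv a B x = conv a (conv b (gbinom a m)) x" by (simp add: B_def Suc)
    also have "\<dots> = conv (conv b a) (gbinom a m) x" by (simp add: conv_assoc conv_comm_fun[of a b])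
    also have "\<dots> = conv b (conv a (gbinom a m)) x" by (simp add: conv_assoc)
    also have "\<dots> = conv b (gbinom a k) x" proof -
      have "gbinom a (Suc m) = conv a (gbinom a m)" by (rule ext, rule gbinom_Suc)
      then show ?thesis by (simp add: Suc)
    qed
    finally show ?thesis by simp
  qed simp
  also have "conv a (gbinom a k) x + conv b (gbinom a k) x + k * conv b (gbinom a k) x + 0
      = gbinom a (Suc k) x + Suc k * conv b (gbinom a (Suc k - 1)) x"
    by (simp add: gbinom_Suc)
  finally show ?case .
qed




lemma vscale_comp [simp]: "vscale c x $ j = c * x $ j"
  by (simp add: vscale_def)

lemma vscale_inj: "0 < p \<Longrightarrow> vscale p x = vscale p y \<Longrightarrow> x = y"
  by (auto simp: vec_eq_iff)

lemma divisible_vscale: "(\<forall>j. p dvd y $ j) \<Longrightarrow> y = vscale p (\<chi> j. y $ j div p)"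
  by (auto simp: vec_eq_iff)

lemma gbinom_supp_zero:
  fixes u :: "nat^'n::finite \<Rightarrow> nat"
  assumes "\<And>y. u y \<noteq> 0 \<Longrightarrow> (\<forall>j. p dvd y $ j)" "\<not> (\<forall>j. p dvd x $ j)"
  shows "gbinom u k x = 0"
  using assms(2)
proof (induction k arbitrary: x)
  case 0
  then have "x \<noteq> 0" by auto
  then show ?case by (simp add: gbinom_0)
next
  case (Suc k)
  have "u y * gbinom u k (x - y) = 0" if "y \<in> D x" for y
  proof (cases "u y = 0")
    case False
    then have dy: "\<forall>j. p dvd y $ j" using assms(1) by blast
    have "\<not> (\<forall>j. p dvd (x - y) $ j)"
    proof
      assume "\<forall>j. p dvd (x - y) $ j"
      then have "\<forall>j. p dvd (y $ j + (x - y) $ j)" using dy by auto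
      moreover have "y $ j + (x - y) $ j = x $ j" for j using that by (auto simp: D_def)
      ultimately show False using Suc.prems by auto
    qed
    then show ?thesis using Suc.IH by simp
  qed simp
  then show ?case by (auto simp: gbinom_Suc conv_def intro!: sum.neutral)
qed

lemma gbinom_vscale:
  fixes h1 :: "nat^'n::finite \<Rightarrow> nat"
  assumes p0: "0 < p"
  defines "a \<equiv> (\<lambda>y. if (\<forall>j. p dvd y $ j) then h1 y else 0)"
  shows "gbinom a m (vscale p z) = gbinom (\<lambda>x. h1 (vscale p x)) m z"
proof (induction m arbitrary: z)
  case 0
  have "vscale p z = 0 \<longleftrightarrow> z = 0" using p0 by (auto simp: vec_eq_iff)
  then show ?case by (simp add: gbinom_0)
next
  case (Suc m)
  let ?G = "gbinom a m"
  have sub: "vscale p ` D z \<subseteq> D (vscale p z)" by (auto simp: D_def)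
  have "gbinom a (Suc m) (vscale p z) = (\<Sum>y\<in>D (vscale p z). a y * ?G (vscale p z - y))"
    by (simp add: gbinom_Suc conv_def)
  also have "\<dots> = (\<Sum>y\<in>vscale p ` D z. a y * ?G (vscale p z - y))"
  proof (rule sum.mono_neutral_right[OF finite_D sub], rule ballI)
    fix y assume y: "y \<in> D (vscale p z) - vscale p ` D z"
    show "a y * ?G (vscale p z - y) = 0"
    proof (cases "\<forall>j. p dvd y $ j")
      case True
      then have "y = vscale p (\<chi> j. y $ j div p)" by (rule divisible_vscale)
      moreover have "(\<chi> j. y $ j div p) \<in> D z" using y True p0
        by (auto simp: D_def) (metis dvd_mult_div_cancel mult_le_cancel1)
      ultimately show ?thesis using y by blast
    qed (auto simp: a_def)
  qed
  also have "\<dots> = (\<Sum>w\<in>D z. a (vscale p w) * ?G (vscale p z - vscale p w))"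
    by (subst sum.reindex) (auto intro: inj_onI vscale_inj[OF p0])
  also have "\<dots> = (\<Sum>w\<in>D z. h1 (vscale p w) * gbinom (\<lambda>x. h1 (vscale p x)) m (z - w))"
  proof (rule sum.cong[OF refl])
    fix w assume "w \<in> D z"
    have "vscale p z - vscale p w = vscale p (z - w)" by (simp add: vec_eq_iff diff_mult_distrib2)
    then show "a (vscale p w) * ?G (vscale p z - vscale p w) = h1 (vscale p w) * gbinom (\<lambda>x. h1 (vscale p x)) m (z - w)"
      using Suc by (simp add: a_def)
  qed
  also have "\<dots> = gbinom (\<lambda>x. h1 (vscale p x)) (Suc m) z" by (simp add: gbinom_Suc conv_def)
  finally show ?case .
qed




theorem theorem10:
  fixes f :: "nat ^ 'n \<Rightarrow> nat" and p n :: nat and l :: "nat ^ 'n"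
  assumes "prime p"
    and "\<forall>m. l \<noteq> vscale p m"
  shows "[gbinom f (n * p) l =
          n * (\<Sum>k \<in> {k \<in> Sset l. \<not> (\<forall>j. p dvd k $ j) \<and> (\<exists>x. l - k = vscale p x)}.
                 gbinom f p k * gbinom (\<lambda>x. gbinom f p (vscale p x)) (n - 1)
                    (THE x. l - k = vscale p x))] (mod p ^ 2)"
proof -
  have p0: "0 < p" using assms(1) prime_gt_0_nat by blast
  have ldiv: "\<not> (\<forall>j. p dvd l $ j)" using assms(2) divisible_vscale by blast
  define h1 where "h1 = gbinom f p"
  define a where "a = (\<lambda>y. if (\<forall>j. p dvd y $ j) then h1 y else 0)"
  define b where "b = (\<lambda>y. if (\<forall>j. p dvd y $ j) then 0 else h1 y)"
  define g where "g = (\<lambda>x. gbinom f p (vscale p x))"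
  define K where "K = {k \<in> Sset l. \<not> (\<forall>j. p dvd k $ j) \<and> (\<exists>x. l - k = vscale p x)}"
  have aZ: "gbinom a m z = 0" if "\<not> (\<forall>j. p dvd z $ j)" for m z
    by (rule gbinom_supp_zero[OF _ that]) (auto simp: a_def split: if_splits)
  show ?thesis
  proof (cases n)
    case 0
    have "l \<noteq> 0" using assms(2) by (metis vec_eq_iff vscale_comp mult_0_right zero_index)
    then show ?thesis using 0 by (simp add: gbinom_0)
  next
    case (Suc m)
    have "gbinom f (n * p) l = gbinom h1 (Suc m) l" unfolding h1_def Suc by (rule gbinom_mult)
    also have "[\<dots> = gbinom a (Suc m) l + Suc m * conv b (gbinom a m) l] (mod p^2)"
      using main_cong[OF assms(1), of f "Suc m" l] unfolding a_def b_def h1_def by simp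
    also have "gbinom a (Suc m) l = 0" by (rule aZ[OF ldiv])
    also have "conv b (gbinom a m) l = (\<Sum>k\<in>K. gbinom f p k * gbinom g m (THE x. l - k = vscale p x))"
      unfolding conv_def
    proof (rule sum.mono_neutral_cong_right[OF finite_D])
      show "K \<subseteq> D l" by (auto simp: K_def Sset_def D_def)
      show "\<forall>y\<in>D l - K. b y * gbinom a m (l - y) = 0"
      proof
        fix y assume y: "y \<in> D l - K"
        show "b y * gbinom a m (l - y) = 0"
        proof (cases "\<forall>j. p dvd y $ j")
          case False
          then have "y \<noteq> 0" by auto
          then have "\<not> (\<exists>x. l - y = vscale p x)" using y False by (auto simp: K_def Sset_def D_def)
          then have "\<not> (\<forall>j. p dvd (l - y) $ j)" using divisible_vscale by blast
          then show ?thesis using aZ by simp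
        qed (simp add: b_def)
      qed
      fix y assume y: "y \<in> K"
      then obtain x where x: "l - y = vscale p x" and nd: "\<not> (\<forall>j. p dvd y $ j)" by (auto simp: K_def)
      have "(THE x. l - y = vscale p x) = x" using x vscale_inj[OF p0] by (intro the_equality) auto
      then show "b y * gbinom a m (l - y) = gbinom f p y * gbinom g m (THE x. l - y = vscale p x)"
        using x nd gbinom_vscale[OF p0, of h1 m x] by (auto simp: b_def a_def g_def h1_def)
    qed
    finally show ?thesis by (simp add: Suc K_def g_def)
  qed
qed


end
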